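(* Let $(\mathfrak{g},[\cdot,\cdot]_{\mathfrak{g}})$ be a Leibniz algebra over a field $\mathbf{K}$, $(V;\rho^L,\rho^R)$ a representation, and $T:V\to\mathfrak{g}$ a relative Rota-Baxter operator. Then for every Nijenhuis element $x\in\mathrm{Nij}(T)$, with $\mathfrak{T}=\partial_Tx$, i.e. $\mathfrak{T}(u)=T\rho^L(x)u-[x,Tu]_{\mathfrak{g}}$, the family $T_t=T+t\mathfrak{T}$ is a trivial linear deformation of $T$.
   Context: A Leibniz algebra is a vector space $\mathfrak{g}$ with a bilinear map $[\cdot,\cdot]_{\mathfrak{g}}$ such that $[x,[y,z]_{\mathfrak{g}}]_{\mathfrak{g}}=[[x,y]_{\mathfrak{g}},z]_{\mathfrak{g}}+[y,[x,z]_{\mathfrak{g}}]_{\mathfrak{g}}$. A representation $(V;\rho^L,\rho^R)$ is a vector space $V$ with linear maps $\rho^L,\rho^R:\mathfrak{g}\to\mathfrak{gl}(V)$ with $\rho^L([x,y]_{\mathfrak{g}})=[\rho^L(x),\rho^L(y)]$, $\rho^R([x,y]_{\mathfrak{g}})=[\rho^L(x),\rho^R(y)]$, $\rho^R(y)\rho^L(x)=-\rho^R(y)\rho^R(x)$ (commutators in $\mathfrak{gl}(V)$). $L_xy=[x,y]_{\mathfrak{g}}$. A relative Rota-Baxter operator is a linear $T:V\to\mathfrak{g}$ with $[Tv_1,Tv_2]_{\mathfrak{g}}=T(\rho^L(Tv_1)v_2+\rho^R(Tv_2)v_1)$ for all $v_1,v_2\in V$. A homomorphism from a relative Rota-Baxter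 operator $T'$ to $T$ is a pair of a Leibniz algebra homomorphism $\phi_{\mathfrak{g}}:\mathfrak{g}\to\mathfrak{g}$ and a linear map $\phi_V:V\to V$ with $T\circ\phi_V=\phi_{\mathfrak{g}}\circ T'$, $\phi_V\rho^L(y)u=\rho^L(\phi_{\mathfrak{g}}(y))\phi_V(u)$, $\phi_V\rho^R(y)u=\rho^R(\phi_{\mathfrak{g}}(y))\phi_V(u)$ for all $y\in\mathfrak{g},u\in V$. A linear map $\mathfrak{T}:V\to\mathfrak{g}$ generates a linear deformation $T_t=T+t\mathfrak{T}$ if $T+t\mathfrak{T}$ is a relative Rota-Baxter operator for every $t\in\mathbf{K}$; it is trivial if there is $y\in\mathfrak{g}$ such that for all $t$, $(\mathrm{Id}_{\mathfrak{g}}+tL_y,\mathrm{Id}_V+t\rho^L(y))$ is a homomorphism from $T_t$ to $T$. An element $x\in\mathfrak{g}$ is a Nijenhuis element associated to $T$ if for all $y,z\in\mathfrak{g}$, $u\in V$: $[[x,y]_{\mathfrak{g}},[x,z]_{\mathfrak{g}}]_{\mathfrak{g}}=0$, $\rho^L([x,y]_{\mathfrak{g}})\rho^L(x)=0$, $\rho^R([x,y]_{\mathfrak{g}})\rho^L(x)=0$, and $[x,T\rho^L(x)u-[x,Tu]_{\mathfrak{g}}]_{\mathfrak{g}}=0$. $\mathrm{Nij}(T)$ denotes the set of these. *)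

theory Defs
  imports Main "HOL.Vector_Spaces"
begin

text \<open>Vector spaces over an arbitrary field 'k are modelled with the library locale
  vector_space (HOL.Vector_Spaces): the Leibniz algebra g lives on type 'g with scalar
  multiplication sg, the representation space V on type 'v with scalar multiplication sv.\<close>

definition leibniz_algebra ::
  "('k::field \<Rightarrow> 'g::ab_group_add \<Rightarrow> 'g) \<Rightarrow> ('g \<Rightarrow> 'g \<Rightarrow> 'g) \<Rightarrow> bool" where
  "leibniz_algebra sg br \<longleftrightarrow>
     vector_space sg \<and>
     (\<forall>x. Vector_Spaces.linear sg sg (br x)) \<and>
     (\<forall>y. Vector_Spaces.linear sg sg (\<lambda>x. br x y)) \<and>
     (\<forall>x y z. br x (br y z) = br (br x y) z + br y (br x z))"

definition representation ::
  "('k::field \<Rightarrow> 'g::ab_group_add \<Rightarrow> 'g) \<Rightarrow> ('g \<Rightarrow> 'g \<Rightarrow> 'g) \<Rightarrow>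
   ('k \<Rightarrow> 'v::ab_group_add \<Rightarrow> 'v) \<Rightarrow> ('g \<Rightarrow> 'v \<Rightarrow> 'v) \<Rightarrow> ('g \<Rightarrow> 'v \<Rightarrow> 'v) \<Rightarrow> bool" where
  "representation sg br sv rhoL rhoR \<longleftrightarrow>
     vector_space sv \<and>
     (\<forall>x. Vector_Spaces.linear sv sv (rhoL x)) \<and>
     (\<forall>x. Vector_Spaces.linear sv sv (rhoR x)) \<and>
     (\<forall>v. Vector_Spaces.linear sg sv (\<lambda>x. rhoL x v)) \<and>
     (\<forall>v. Vector_Spaces.linear sg sv (\<lambda>x. rhoR x v)) \<and>
     (\<forall>x y v. rhoL (br x y) v = rhoL x (rhoL y v) - rhoL y (rhoL x v)) \<and>
     (\<forall>x y v. rhoR (br x y) v = rhoL x (rhoR y v) - rhoR y (rhoL x v)) \<and>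
     (\<forall>x y v. rhoR y (rhoL x v) = - rhoR y (rhoR x v))"

definition relative_RB ::
  "('k::field \<Rightarrow> 'g::ab_group_add \<Rightarrow> 'g) \<Rightarrow> ('g \<Rightarrow> 'g \<Rightarrow> 'g) \<Rightarrow>
   ('k \<Rightarrow> 'v::ab_group_add \<Rightarrow> 'v) \<Rightarrow> ('g \<Rightarrow> 'v \<Rightarrow> 'v) \<Rightarrow> ('g \<Rightarrow> 'v \<Rightarrow> 'v) \<Rightarrow>
   ('v \<Rightarrow> 'g) \<Rightarrow> bool" where
  "relative_RB sg br sv rhoL rhoR T \<longleftrightarrow>
     Vector_Spaces.linear sv sg T \<and>
     (\<forall>v1 v2. br (T v1) (T v2) = T (rhoL (T v1) v2 + rhoR (T v2) v1))"

definition leibniz_hom ::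
  "('k::field \<Rightarrow> 'g::ab_group_add \<Rightarrow> 'g) \<Rightarrow> ('g \<Rightarrow> 'g \<Rightarrow> 'g) \<Rightarrow> ('g \<Rightarrow> 'g) \<Rightarrow> bool" where
  "leibniz_hom sg br phi \<longleftrightarrow>
     Vector_Spaces.linear sg sg phi \<and> (\<forall>x y. phi (br x y) = br (phi x) (phi y))"

definition RB_hom ::
  "('k::field \<Rightarrow> 'g::ab_group_add \<Rightarrow> 'g) \<Rightarrow> ('g \<Rightarrow> 'g \<Rightarrow> 'g) \<Rightarrow>
   ('k \<Rightarrow> 'v::ab_group_add \<Rightarrow> 'v) \<Rightarrow> ('g \<Rightarrow> 'v \<Rightarrow> 'v) \<Rightarrow> ('g \<Rightarrow> 'v \<Rightarrow> 'v) \<Rightarrow>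
   ('v \<Rightarrow> 'g) \<Rightarrow> ('v \<Rightarrow> 'g) \<Rightarrow> ('g \<Rightarrow> 'g) \<Rightarrow> ('v \<Rightarrow> 'v) \<Rightarrow> bool" where
  "RB_hom sg br sv rhoL rhoR T' T phiG phiV \<longleftrightarrow>
     leibniz_hom sg br phiG \<and>
     Vector_Spaces.linear sv sv phiV \<and>
     (\<forall>u. T (phiV u) = phiG (T' u)) \<and>
     (\<forall>y u. phiV (rhoL y u) = rhoL (phiG y) (phiV u)) \<and>
     (\<forall>y u. phiV (rhoR y u) = rhoR (phiG y) (phiV u))"

definition generates_linear_deformation ::
  "('k::field \<Rightarrow> 'g::ab_group_add \<Rightarrow> 'g) \<Rightarrow> ('g \<Rightarrow> 'g \<Rightarrow> 'g) \<Rightarrow>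
   ('k \<Rightarrow> 'v::ab_group_add \<Rightarrow> 'v) \<Rightarrow> ('g \<Rightarrow> 'v \<Rightarrow> 'v) \<Rightarrow> ('g \<Rightarrow> 'v \<Rightarrow> 'v) \<Rightarrow>
   ('v \<Rightarrow> 'g) \<Rightarrow> ('v \<Rightarrow> 'g) \<Rightarrow> bool" where
  "generates_linear_deformation sg br sv rhoL rhoR T TT \<longleftrightarrow>
     Vector_Spaces.linear sv sg TT \<and>
     (\<forall>t. relative_RB sg br sv rhoL rhoR (\<lambda>v. T v + sg t (TT v)))"

definition trivial_linear_deformation ::
  "('k::field \<Rightarrow> 'g::ab_group_add \<Rightarrow> 'g) \<Rightarrow> ('g \<Rightarrow> 'g \<Rightarrow> 'g) \<Rightarrow>
   ('k \<Rightarrow> 'v::ab_group_add \<Rightarrow> 'v) \<Rightarrow> ('g \<Rightarrow> 'v \<Rightarrow> 'v) \<Rightarrow> ('g \<Rightarrow> 'v \<Rightarrow> 'v) \<Rightarrow>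
   ('v \<Rightarrow> 'g) \<Rightarrow> ('v \<Rightarrow> 'g) \<Rightarrow> bool" where
  "trivial_linear_deformation sg br sv rhoL rhoR T TT \<longleftrightarrow>
     generates_linear_deformation sg br sv rhoL rhoR T TT \<and>
     (\<exists>y. \<forall>t. RB_hom sg br sv rhoL rhoR (\<lambda>v. T v + sg t (TT v)) T
                (\<lambda>z. z + sg t (br y z)) (\<lambda>u. u + sv t (rhoL y u)))"

definition Nij ::
  "('g::ab_group_add \<Rightarrow> 'g \<Rightarrow> 'g) \<Rightarrow> ('g \<Rightarrow> 'v::ab_group_add \<Rightarrow> 'v) \<Rightarrow> ('g \<Rightarrow> 'v \<Rightarrow> 'v) \<Rightarrow>
   ('v \<Rightarrow> 'g) \<Rightarrow> 'g set" where
  "Nij br rhoL rhoR T = {x.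
     (\<forall>y z. br (br x y) (br x z) = 0) \<and>
     (\<forall>y u. rhoL (br x y) (rhoL x u) = 0) \<and>
     (\<forall>y u. rhoR (br x y) (rhoL x u) = 0) \<and>
     (\<forall>u. br x (T (rhoL x u) - br x (T u)) = 0)}"

definition dT :: "('g::ab_group_add \<Rightarrow> 'g \<Rightarrow> 'g) \<Rightarrow> ('g \<Rightarrow> 'v \<Rightarrow> 'v) \<Rightarrow> ('v \<Rightarrow> 'g) \<Rightarrow> 'g \<Rightarrow> 'v \<Rightarrow> 'g" where
  "dT br rhoL T x u = T (rhoL x u) - br x (T u)"

end

theory Submission
  imports Defs
begin

lemma addf:
  fixes f :: "'a::ab_group_add \<Rightarrow> 'b::ab_group_add"
  assumes h: "\<And>a b. f (a+b) = f a + f b"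
  shows "f 0 = 0" "f (a - b) = f a - f b" "f (-a) = - f a"
proof -
  have "f 0 = f 0 + f 0" using h[of 0 0] by simp
  then show z: "f 0 = 0" by simp
  have n: "f (-c) = - f c" for c
  proof -
    have "f c + f (-c) = 0" using h[of c "-c"] z by simp
    then show ?thesis by (simp add: eq_neg_iff_add_eq_0 add.commute)
  qed
  then show "f (-a) = - f a" .
  have "f (a + - b) = f a + f (-b)" by (rule h)
  then show "f (a - b) = f a - f b" using n[of b] by simp
qed

theorem theorem3p8:
  fixes sg :: "'k::field \<Rightarrow> 'g::ab_group_add \<Rightarrow> 'g"
    and br :: "'g \<Rightarrow> 'g \<Rightarrow> 'g"
    and sv :: "'k \<Rightarrow> 'v::ab_group_add \<Rightarrow> 'v"
    and rhoL rhoR :: "'g \<Rightarrow> 'v \<Rightarrow> 'v"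
    and T :: "'v \<Rightarrow> 'g"
    and x :: 'g
  assumes "leibniz_algebra sg br"
    and "representation sg br sv rhoL rhoR"
    and "relative_RB sg br sv rhoL rhoR T"
    and "x \<in> Nij br rhoL rhoR T"
  shows "trivial_linear_deformation sg br sv rhoL rhoR T (dT br rhoL T x)"
proof -
  have VG: "vector_space sg" using assms(1) unfolding leibniz_algebra_def by blast
  have VV: "vector_space sv" using assms(2) unfolding representation_def by blast
  interpret G: vector_space sg by (rule VG)
  interpret V: vector_space sv by (rule VV)
  have l1: "\<And>y. Vector_Spaces.linear sg sg (br y)" and l2: "\<And>y. Vector_Spaces.linear sg sg (\<lambda>z. br z y)"
    and Leib: "\<And>a b c. br a (br b c) = br (br a b) c + br b (br a c)"
    using assms(1) unfolding leibniz_algebra_def by blast+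
  have rl1: "\<And>y. Vector_Spaces.linear sv sv (rhoL y)" and rr1: "\<And>y. Vector_Spaces.linear sv sv (rhoR y)"
    and rl2: "\<And>v. Vector_Spaces.linear sg sv (\<lambda>y. rhoL y v)" and rr2: "\<And>v. Vector_Spaces.linear sg sv (\<lambda>y. rhoR y v)"
    and RepL: "\<And>a b v. rhoL (br a b) v = rhoL a (rhoL b v) - rhoL b (rhoL a v)"
    and RepR: "\<And>a b v. rhoR (br a b) v = rhoL a (rhoR b v) - rhoR b (rhoL a v)"
    using assms(2) unfolding representation_def by blast+
  have lT: "Vector_Spaces.linear sv sg T" and RB: "\<And>v1 v2. br (T v1) (T v2) = T (rhoL (T v1) v2 + rhoR (T v2) v1)"
    using assms(3) unfolding relative_RB_def by blast+
  have N1: "\<And>y z. br (br x y) (br x z) = 0" and N2: "\<And>y u. rhoL (br x y) (rhoL x u) = 0"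
    and N3: "\<And>y u. rhoR (br x y) (rhoL x u) = 0" and N4: "\<And>u. br x (T (rhoL x u) - br x (T u)) = 0"
    using assms(4) unfolding Nij_def by blast+
  have Ba1: "\<And>a b c. br c (a+b) = br c a + br c b" and Bs1: "\<And>k a c. br c (sg k a) = sg k (br c a)"
    using l1 unfolding linear_iff by blast+
  have Ba2: "\<And>a b c. br (a+b) c = br a c + br b c" and Bs2: "\<And>k a c. br (sg k a) c = sg k (br a c)"
    using l2 unfolding linear_iff by blast+
  have La1: "\<And>a b y. rhoL y (a+b) = rhoL y a + rhoL y b" and Ls1: "\<And>k a y. rhoL y (sv k a) = sv k (rhoL y a)"
    using rl1 unfolding linear_iff by blast+
  have Ra1: "\<And>a b y. rhoR y (a+b) = rhoR y a + rhoR y b" and Rs1: "\<And>k a y. rhoR y (sv k a) = sv k (rhoR y a)"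
    using rr1 unfolding linear_iff by blast+
  have La2: "\<And>a b v. rhoL (a+b) v = rhoL a v + rhoL b v" and Ls2: "\<And>k a v. rhoL (sg k a) v = sv k (rhoL a v)"
    using rl2 unfolding linear_iff by blast+
  have Ra2: "\<And>a b v. rhoR (a+b) v = rhoR a v + rhoR b v" and Rs2: "\<And>k a v. rhoR (sg k a) v = sv k (rhoR a v)"
    using rr2 unfolding linear_iff by blast+
  have Ta: "\<And>a b. T (a+b) = T a + T b" and Ts: "\<And>k a. T (sv k a) = sg k (T a)"
    using lT unfolding linear_iff by blast+
  note Bd1 = addf[where f="br c" for c, OF Ba1]
  note Bd2 = addf[where f="\<lambda>z. br z c" for c, OF Ba2]
  note Ld1 = addf[where f="rhoL c" for c, OF La1]
  note Ld2 = addf[where f="\<lambda>z. rhoL z c" for c, OF La2]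
  note Rd1 = addf[where f="rhoR c" for c, OF Ra1]
  note Rd2 = addf[where f="\<lambda>z. rhoR z c" for c, OF Ra2]
  note Td = addf[where f="T", OF Ta]
  note lin = Ba1 Bs1 Ba2 Bs2 La1 Ls1 Ra1 Rs1 La2 Ls2 Ra2 Rs2 Ta Ts Bd1 Bd2 Ld1 Ld2 Rd1 Rd2 Td
    G.scale_right_distrib G.scale_right_diff_distrib G.scale_scale G.scale_minus_right
    V.scale_right_distrib V.scale_right_diff_distrib V.scale_scale V.scale_minus_right
  define P where "P = dT br rhoL T x"
  have P: "\<And>u. P u = T (rhoL x u) - br x (T u)" unfolding P_def dT_def by simp
  define phi where "phi t z = z + sg t (br x z)" for t z
  define psi where "psi t u = u + sv t (rhoL x u)" for t u
  define S where "S t w = T w + sg t (P w)" for t w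
  have lP: "Vector_Spaces.linear sv sg P"
    unfolding linear_iff using VG VV by (simp add: P lin algebra_simps)
  have Pa: "\<And>a b. P (a+b) = P a + P b" and Ps: "\<And>k a. P (sv k a) = sg k (P a)"
    using lP unfolding linear_iff by blast+
  note Pd = addf[where f="P", OF Pa]
  have hom: "RB_hom sg br sv rhoL rhoR (S t) T (phi t) (psi t)" for t
  proof -
    have "leibniz_hom sg br (phi t)"
      unfolding leibniz_hom_def
    proof (intro conjI allI)
      show "Vector_Spaces.linear sg sg (phi t)"
        unfolding linear_iff phi_def using VG by (simp add: lin algebra_simps)
      fix a b
      show "phi t (br a b) = br (phi t a) (phi t b)"
        unfolding phi_def using N1[of a b] by (simp add: lin Leib[of x a b] algebra_simps)
    qed
    moreover have "Vector_Spaces.linear sv sv (psi t)"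
      unfolding linear_iff psi_def using VV by (simp add: lin algebra_simps)
    moreover have "T (psi t u) = phi t (S t u)" for u
      unfolding psi_def phi_def S_def using N4[of u] by (simp add: P lin algebra_simps)
    moreover have "psi t (rhoL y u) = rhoL (phi t y) (psi t u)" for y u
      unfolding psi_def phi_def using N2[of y u] by (simp add: lin RepL algebra_simps)
    moreover have "psi t (rhoR y u) = rhoR (phi t y) (psi t u)" for y u
      unfolding psi_def phi_def using N3[of y u] by (simp add: lin RepR algebra_simps)
    ultimately show ?thesis unfolding RB_hom_def by blast
  qed
  have RBt: "relative_RB sg br sv rhoL rhoR (S t)" for t
  proof -
    have "br (S t u) (S t v) = S t (rhoL (S t u) v + rhoR (S t v) u)" for u v
    proof -
      define D where "D t = br (S t u) (S t v) - S t (rhoL (S t u) v + rhoR (S t v) u)" for t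
      define D1 where "D1 = br (P u) (T v) + br (T u) (P v) - T (rhoL (P u) v + rhoR (P v) u)
          - P (rhoL (T u) v + rhoR (T v) u)"
      define D2 where "D2 = br (P u) (P v) - P (rhoL (P u) v + rhoR (P v) u)"
      have exp: "D t = sg t D1 + sg (t*t) D2"
        unfolding D_def D1_def D2_def S_def
        by (simp add: lin Pa Ps Pd RB algebra_simps)
      have K: "br x (T (rhoL (T u) v)) + br x (T (rhoR (T v) u))
           = br (br x (T u)) (T v) + br (T u) (br x (T v))"
        using Leib[of x "T u" "T v"] by (simp add: RB lin)
      have D10: "D1 = 0"
        unfolding D1_def using K by (simp add: P RB lin RepL RepR algebra_simps)
      have xP: "br x (P z) = 0" for z using N4[of z] by (simp add: P)
      have D20: "br x D2 = 0"
        unfolding D2_def using Leib[of x "P u" "P v"] by (simp add: xP Bd1 Bd2)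
      have hom': "leibniz_hom sg br (phi t)" "Vector_Spaces.linear sv sv (psi t)"
        "\<And>u. T (psi t u) = phi t (S t u)"
        "\<And>y u. psi t (rhoL y u) = rhoL (phi t y) (psi t u)"
        "\<And>y u. psi t (rhoR y u) = rhoR (phi t y) (psi t u)"
        using hom[of t] unfolding RB_hom_def by blast+
      have phia: "\<And>a b. phi t (a - b) = phi t a - phi t b" and phib: "\<And>a b. phi t (br a b) = br (phi t a) (phi t b)"
        using hom'(1) unfolding leibniz_hom_def linear_iff by (auto intro: addf)
      have psia: "\<And>a b. psi t (a + b) = psi t a + psi t b"
        using hom'(2) unfolding linear_iff by blast
      have "phi t (D t) = br (phi t (S t u)) (phi t (S t v)) - phi t (S t (rhoL (S t u) v + rhoR (S t v) u))"
        unfolding D_def by (simp add: phia phib)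
      also have "\<dots> = br (T (psi t u)) (T (psi t v)) - T (psi t (rhoL (S t u) v + rhoR (S t v) u))"
        by (simp add: hom'(3))
      also have "\<dots> = T (rhoL (T (psi t u)) (psi t v) + rhoR (T (psi t v)) (psi t u)) - T (psi t (rhoL (S t u) v + rhoR (S t v) u))"
        by (simp only: RB)
      also have "\<dots> = T (psi t (rhoL (S t u) v) + psi t (rhoR (S t v) u)) - T (psi t (rhoL (S t u) v + rhoR (S t v) u))"
        by (simp only: hom'(3,4,5))
      also have "\<dots> = 0"
        by (simp only: psia diff_self)
      finally have "phi t (D t) = 0" .
      moreover have "phi t (D t) = D t"
        unfolding phi_def exp D10 by (simp add: lin D20)
      ultimately show ?thesis unfolding D_def by simp
    qed
    moreover have "Vector_Spaces.linear sv sg (S t)"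
      unfolding linear_iff S_def using VG VV by (simp add: lin Pa Ps algebra_simps)
    ultimately show ?thesis unfolding relative_RB_def by blast
  qed
  show ?thesis
    unfolding trivial_linear_deformation_def generates_linear_deformation_def
    using lP RBt hom unfolding P_def S_def phi_def psi_def by blast
qed

end
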